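(* Let $\mathcal{C}$ be a simplicial complex on $[n]$, with $\mathcal{A}_{\mathcal{C}}$ indexed by $\{0,1\}$-vectors. Then the set \[K=\Big\{\sum_{\mathbf{j}\in\{0,1\}^S}(-1)^{\|\mathbf{j}\|_1}e_{\mathbf{i},\mathbf{j}} : S \text{ a minimal non-face of } \mathcal{C},\ \mathbf{i}\in\{0,1\}^{[n]\setminus S}\Big\}\] spans $\ker(\mathcal{A}_{\mathcal{C}})$. Furthermore, if $M'$ is the matrix whose columns are the elements of $K$, then multiplying a suitable set of rows and columns of $M'$ by $-1$ yields the matrix $M$ whose columns are the vectors $\sum_{\mathbf{j}\in\{0,1\}^S}e_{\mathbf{i},\mathbf{j}}$, for $S$ a minimal non-face of $\mathcal{C}$ and $\mathbf{i}\in\{0,1\}^{[n]\setminus S}$ (with columns indexed in the same way).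
   Context: A simplicial complex on $[n]$ is a family of subsets of $[n]$ closed under subsets; facets are inclusion-maximal faces; a minimal non-face is a subset of $[n]$ not in $\mathcal{C}$ all of whose proper subsets are in $\mathcal{C}$. Here $\mathcal{A}_{\mathcal{C}}$ is the $0/1$ matrix with columns indexed by $\mathbf{k}\in\{0,1\}^n$ and rows indexed by pairs $(F,\mathbf{e})$, $F$ a facet, $\mathbf{e}\in\{0,1\}^F$, with entry $1$ iff $\mathbf{e}=\mathbf{k}|_F$. For $S\subseteq[n]$, $\mathbf{j}\in\{0,1\}^S$ and $\mathbf{i}\in\{0,1\}^{[n]\setminus S}$, $e_{\mathbf{i},\mathbf{j}}\in\mathbb{R}^{\{0,1\}^n}$ is the standard basis vector at the index $\mathbf{k}$ with $\mathbf{k}|_S=\mathbf{j}$ and $\mathbf{k}|_{[n]\setminus S}=\mathbf{i}$. $\|\mathbf{j}\|_1$ is the number of ones in $\mathbf{j}$. *)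

theory Defs
  imports Complex_Main
begin

text \<open>Vertex set [n] is rendered as {..<n}. A simplicial complex is a family of
  subsets of [n] closed under taking subsets.\<close>

definition simplicial_complex :: "nat \<Rightarrow> nat set set \<Rightarrow> bool" where
  "simplicial_complex n C \<longleftrightarrow> (\<forall>F\<in>C. F \<subseteq> {..<n}) \<and> (\<forall>F\<in>C. \<forall>G. G \<subseteq> F \<longrightarrow> G \<in> C)"

definition facets :: "nat set set \<Rightarrow> nat set set" where
  "facets C = {F \<in> C. \<forall>G\<in>C. F \<subseteq> G \<longrightarrow> G = F}"

definition min_nonfaces :: "nat \<Rightarrow> nat set set \<Rightarrow> nat set set" where
  "min_nonfaces n C = {S. S \<subseteq> {..<n} \<and> S \<notin> C \<and> (\<forall>T. T \<subset> S \<longrightarrow> T \<in> C)}"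

definition binvecs :: "nat set \<Rightarrow> (nat \<Rightarrow> nat) set" where
  "binvecs A = {k. (\<forall>t\<in>A. k t \<in> {0,1}) \<and> (\<forall>t. t \<notin> A \<longrightarrow> k t = 0)}"

definition restr :: "(nat \<Rightarrow> nat) \<Rightarrow> nat set \<Rightarrow> (nat \<Rightarrow> nat)" where
  "restr k F = (\<lambda>t. if t \<in> F then k t else 0)"

text \<open>The matrix A_C: rows (F,e), F a facet, e in {0,1}^F; columns k in {0,1}^n.\<close>

definition AC_rows :: "nat set set \<Rightarrow> (nat set \<times> (nat \<Rightarrow> nat)) set" where
  "AC_rows C = {(F, e). F \<in> facets C \<and> e \<in> binvecs F}"

definition AC_cols :: "nat \<Rightarrow> (nat \<Rightarrow> nat) set" where
  "AC_cols n = binvecs {..<n}"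

definition AC :: "nat set \<times> (nat \<Rightarrow> nat) \<Rightarrow> (nat \<Rightarrow> nat) \<Rightarrow> real" where
  "AC r k = (if snd r = restr k (fst r) then 1 else 0)"

text \<open>Vectors in R^({0,1}^n) are functions on 0/1 vectors vanishing outside {0,1}^n.\<close>

definition AC_kernel :: "nat \<Rightarrow> nat set set \<Rightarrow> ((nat \<Rightarrow> nat) \<Rightarrow> real) set" where
  "AC_kernel n C = {x. (\<forall>k. k \<notin> AC_cols n \<longrightarrow> x k = 0) \<and>
      (\<forall>r\<in>AC_rows C. (\<Sum>k\<in>AC_cols n. AC r k * x k) = 0)}"

text \<open>The index k with k|_S = j and k|_([n]-S) = i.\<close>

definition glue :: "nat set \<Rightarrow> (nat \<Rightarrow> nat) \<Rightarrow> (nat \<Rightarrow> nat) \<Rightarrow> (nat \<Rightarrow> nat)" where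
  "glue S i j = (\<lambda>t. if t \<in> S then j t else i t)"

definition unitvec :: "nat set \<Rightarrow> (nat \<Rightarrow> nat) \<Rightarrow> (nat \<Rightarrow> nat) \<Rightarrow> (nat \<Rightarrow> nat) \<Rightarrow> real" where
  "unitvec S i j = (\<lambda>k. if k = glue S i j then 1 else 0)"

definition norm1 :: "nat set \<Rightarrow> (nat \<Rightarrow> nat) \<Rightarrow> nat" where
  "norm1 S j = (\<Sum>t\<in>S. j t)"

definition col_idx :: "nat \<Rightarrow> nat set set \<Rightarrow> (nat set \<times> (nat \<Rightarrow> nat)) set" where
  "col_idx n C = {(S, i). S \<in> min_nonfaces n C \<and> i \<in> binvecs ({..<n} - S)}"

definition Kvec :: "nat set \<times> (nat \<Rightarrow> nat) \<Rightarrow> (nat \<Rightarrow> nat) \<Rightarrow> real" where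
  "Kvec p = (\<lambda>k. \<Sum>j\<in>binvecs (fst p). (-1) ^ norm1 (fst p) j * unitvec (fst p) (snd p) j k)"

definition Mvec :: "nat set \<times> (nat \<Rightarrow> nat) \<Rightarrow> (nat \<Rightarrow> nat) \<Rightarrow> real" where
  "Mvec p = (\<lambda>k. \<Sum>j\<in>binvecs (fst p). unitvec (fst p) (snd p) j k)"

definition Kset :: "nat \<Rightarrow> nat set set \<Rightarrow> ((nat \<Rightarrow> nat) \<Rightarrow> real) set" where
  "Kset n C = Kvec ` col_idx n C"

definition lin_span :: "('a \<Rightarrow> real) set \<Rightarrow> ('a \<Rightarrow> real) set" where
  "lin_span V = {x. \<exists>W c. finite W \<and> W \<subseteq> V \<and> x = (\<lambda>k. \<Sum>v\<in>W. c v * v k)}"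

end

theory Submission
  imports Defs
begin

definition ind :: "nat set \<Rightarrow> nat \<Rightarrow> nat" where
  "ind P = (\<lambda>t. if t \<in> P then 1 else 0)"

lemma ind_inj: "ind P = ind Q \<Longrightarrow> P = Q"
  unfolding ind_def by (metis one_neq_zero set_eqI)

lemma ind_inj_on: "inj_on ind A"
  by (meson ind_inj inj_onI)

lemma binvec_ind: "k \<in> binvecs A \<Longrightarrow> k = ind {t\<in>A. k t = 1}"
  unfolding binvecs_def ind_def by (rule ext) auto

lemma binvecs_eq: "binvecs A = ind ` Pow A"
proof
  show "binvecs A \<subseteq> ind ` Pow A"
  proof
    fix k assume k: "k \<in> binvecs A"
    hence "k = ind {t\<in>A. k t = 1}" by (rule binvec_ind)
    thus "k \<in> ind ` Pow A" by auto
  qed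
  show "ind ` Pow A \<subseteq> binvecs A" unfolding binvecs_def ind_def by auto
qed

lemma sum_binvecs: "sum f (binvecs S) = (\<Sum>W\<in>Pow S. f (ind W))"
  by (simp add: binvecs_eq sum.reindex ind_inj_on)

lemma sum_ind: "finite S \<Longrightarrow> W \<subseteq> S \<Longrightarrow> (\<Sum>t\<in>S. ind W t) = card W"
  unfolding ind_def by (simp add: sum.If_cases Int_absorb1)

lemma norm1_ind: "finite S \<Longrightarrow> W \<subseteq> S \<Longrightarrow> norm1 S (ind W) = card W"
  unfolding norm1_def by (rule sum_ind)

lemma glue_ind: "W \<subseteq> S \<Longrightarrow> B \<inter> S = {} \<Longrightarrow> glue S (ind B) (ind W) = ind (W \<union> B)"
  unfolding glue_def ind_def by (rule ext) auto

lemma restr_ind: "restr (ind Q) F = ind (Q \<inter> F)"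
  unfolding restr_def ind_def by (rule ext) auto

definition alt :: "nat set \<Rightarrow> nat set \<Rightarrow> (nat \<Rightarrow> nat) \<Rightarrow> real" where
  "alt S B = (\<lambda>k. \<Sum>W\<in>Pow S. (-1::real)^card W * (if k = ind (W \<union> B) then 1 else 0))"

definition altM :: "nat set \<Rightarrow> nat set \<Rightarrow> (nat \<Rightarrow> nat) \<Rightarrow> real" where
  "altM S B = (\<lambda>k. \<Sum>W\<in>Pow S. (if k = ind (W \<union> B) then 1 else 0))"

lemma Kvec_alt: "finite S \<Longrightarrow> B \<inter> S = {} \<Longrightarrow> Kvec (S, ind B) = alt S B"
  unfolding Kvec_def alt_def unitvec_def
  by (rule ext) (simp add: sum_binvecs norm1_ind glue_ind)

lemma Mvec_alt: "finite S \<Longrightarrow> B \<inter> S = {} \<Longrightarrow> Mvec (S, ind B) = altM S B"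
  unfolding Mvec_def altM_def unitvec_def
  by (rule ext) (simp add: sum_binvecs glue_ind)

lemma sum_invol_zero:
  assumes "finite A" "\<And>x. x\<in>A \<Longrightarrow> h x \<in> A" "\<And>x. x\<in>A \<Longrightarrow> h (h x) = x"
    "\<And>x. x\<in>A \<Longrightarrow> f (h x) = - f x"
  shows "sum f A = (0::real)"
proof -
  have "sum f A = sum (f \<circ> h) A"
    apply (rule sum.reindex_bij_witness[of A h h])
    using assms(2,3) by auto
  also have "\<dots> = sum (\<lambda>x. - f x) A" using assms(4) by (intro sum.cong) auto
  also have "\<dots> = - sum f A" by (simp add: sum_negf)
  finally show ?thesis by simp
qed

definition fl :: "nat \<Rightarrow> nat set \<Rightarrow> nat set" where
  "fl a T = (if a \<in> T then T - {a} else insert a T)"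

lemma card_fl: "finite T \<Longrightarrow> (-1::real)^card (fl a T) = - ((-1)^card T)"
proof (cases "a \<in> T")
  case True
  assume "finite T"
  then obtain m where m: "card (T - {a}) = m" "card T = Suc m" using True
    by (metis card_Suc_Diff1)
  have "fl a T = T - {a}" using True by (simp add: fl_def)
  then show ?thesis using m by simp
next
  case False
  assume "finite T"
  then show ?thesis using False by (simp add: fl_def)
qed

lemma fl_fl: "fl a (fl a T) = T"
  unfolding fl_def by auto


lemma alt_insert:
  assumes "finite T" "a \<notin> T"
  shows "alt (insert a T) B k = alt T B k - alt T (insert a B) k"
proof -
  have fin: "finite (Pow T)" using assms by simp
  have disj: "Pow T \<inter> insert a ` Pow T = {}" using assms by auto
  have inj: "inj_on (insert a) (Pow T)"
  proof (rule inj_onI)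
    fix x y assume "x \<in> Pow T" "y \<in> Pow T" "insert a x = insert a y"
    then show "x = y" using assms(2) by (metis Diff_insert_absorb PowD subsetD)
  qed
  have "alt (insert a T) B k = (\<Sum>W\<in>Pow T. (-1::real)^card W * (if k = ind (W \<union> B) then 1 else 0))
     + (\<Sum>W\<in>insert a ` Pow T. (-1::real)^card W * (if k = ind (W \<union> B) then 1 else 0))"
    unfolding alt_def Pow_insert using fin disj by (simp add: sum.union_disjoint)
  also have "(\<Sum>W\<in>insert a ` Pow T. (-1::real)^card W * (if k = ind (W \<union> B) then 1 else 0))
     = (\<Sum>W\<in>Pow T. (-1::real)^card (insert a W) * (if k = ind (insert a W \<union> B) then 1 else 0))"
    using inj by (simp add: sum.reindex)
  also have "\<dots> = (\<Sum>W\<in>Pow T. - ((-1::real)^card W * (if k = ind (W \<union> insert a B) then 1 else 0)))"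
  proof (rule sum.cong)
    fix W assume W: "W \<in> Pow T"
    then have "finite W" "a \<notin> W" using assms finite_subset by auto
    then show "(-1::real)^card (insert a W) * (if k = ind (insert a W \<union> B) then 1 else 0)
      = - ((-1::real)^card W * (if k = ind (W \<union> insert a B) then 1 else 0))" by simp
  qed simp
  finally show ?thesis unfolding alt_def by (simp add: sum_negf)
qed

lemma lin_span_zero: "(\<lambda>k. 0) \<in> lin_span V"
  unfolding lin_span_def by (rule CollectI, rule exI[of _ "{}"]) auto

lemma lin_span_base: "v \<in> V \<Longrightarrow> v \<in> lin_span V"
  unfolding lin_span_def by (rule CollectI, rule exI[of _ "{v}"], rule exI[of _ "\<lambda>_. 1"]) auto

lemma lin_span_add:
  assumes "x \<in> lin_span V" "y \<in> lin_span V"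
  shows "(\<lambda>k. x k + a * y k) \<in> lin_span V"
proof -
  obtain W1 c1 where 1: "finite W1" "W1 \<subseteq> V" "x = (\<lambda>k. \<Sum>v\<in>W1. c1 v * v k)"
    using assms(1) unfolding lin_span_def by blast
  obtain W2 c2 where 2: "finite W2" "W2 \<subseteq> V" "y = (\<lambda>k. \<Sum>v\<in>W2. c2 v * v k)"
    using assms(2) unfolding lin_span_def by blast
  define c where "c v = (if v \<in> W1 then c1 v else 0) + a * (if v \<in> W2 then c2 v else 0)" for v
  have "(\<lambda>k. x k + a * y k) = (\<lambda>k. \<Sum>v\<in>W1 \<union> W2. c v * v k)"
  proof
    fix k
    have "(\<Sum>v\<in>W1 \<union> W2. c v * v k) = (\<Sum>v\<in>W1 \<union> W2. (if v \<in> W1 then c1 v * v k else 0))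
       + a * (\<Sum>v\<in>W1 \<union> W2. (if v \<in> W2 then c2 v * v k else 0))"
      unfolding c_def sum_distrib_left sum.distrib[symmetric] by (rule sum.cong) (auto simp: algebra_simps)
    also have "\<dots> = (\<Sum>v\<in>W1. c1 v * v k) + a * (\<Sum>v\<in>W2. c2 v * v k)"
    proof -
      have "(\<Sum>v\<in>W1 \<union> W2. (if v \<in> W1 then c1 v * v k else 0)) = (\<Sum>v\<in>(W1 \<union> W2) \<inter> W1. c1 v * v k)"
        using 1 2 by (intro sum.inter_restrict[symmetric]) auto
      moreover have "(\<Sum>v\<in>W1 \<union> W2. (if v \<in> W2 then c2 v * v k else 0)) = (\<Sum>v\<in>(W1 \<union> W2) \<inter> W2. c2 v * v k)"
        using 1 2 by (intro sum.inter_restrict[symmetric]) auto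
      moreover have "(W1 \<union> W2) \<inter> W1 = W1" "(W1 \<union> W2) \<inter> W2 = W2" by auto
      ultimately show ?thesis by simp
    qed
    finally show "x k + a * y k = (\<Sum>v\<in>W1 \<union> W2. c v * v k)" using 1 2 by simp
  qed
  then show ?thesis unfolding lin_span_def using 1 2 by blast
qed

lemma lin_span_comb:
  assumes "finite I" "\<And>i. i \<in> I \<Longrightarrow> f i \<in> lin_span V"
  shows "(\<lambda>k. \<Sum>i\<in>I. a i * f i k) \<in> lin_span V"
  using assms
proof (induction I rule: finite_induct)
  case empty
  then show ?case using lin_span_zero by simp
next
  case (insert j I)
  have "(\<lambda>k. (\<Sum>i\<in>I. a i * f i k) + a j * f j k) \<in> lin_span V"
    using insert by (intro lin_span_add) auto
  then show ?case using insert by (simp add: add.commute)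
qed

lemma alt_row_zero:
  assumes "finite S" "s \<in> S" "s \<notin> F"
  shows "(\<Sum>W\<in>Pow S. (-1::real)^card W * (if e = ind ((W \<union> B) \<inter> F) then 1 else 0)) = 0"
proof (rule sum_invol_zero[where h = "fl s"])
  show "finite (Pow S)" using assms by simp
  fix W assume W: "W \<in> Pow S"
  show "fl s W \<in> Pow S" using W assms unfolding fl_def by auto
  show "fl s (fl s W) = W" by (rule fl_fl)
  have fW: "finite W" using W assms finite_subset by auto
  have "(fl s W \<union> B) \<inter> F = (W \<union> B) \<inter> F" using assms unfolding fl_def by auto
  then show "(-1::real)^card (fl s W) * (if e = ind ((fl s W \<union> B) \<inter> F) then 1 else 0)
     = - ((-1::real)^card W * (if e = ind ((W \<union> B) \<inter> F) then 1 else 0))"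
    using card_fl[OF fW, of s] by simp
qed

lemma alt_eval: "finite T \<Longrightarrow> alt T {} (ind P) = (if P \<subseteq> T then (-1)^card P else 0)"
proof -
  assume fT: "finite T"
  have "alt T {} (ind P) = (\<Sum>W\<in>Pow T. if W = P then (-1::real)^card W else 0)"
    unfolding alt_def by (rule sum.cong) (auto dest: ind_inj)
  also have "\<dots> = (if P \<subseteq> T then (-1)^card P else 0)"
    using fT by (simp add: sum.delta)
  finally show ?thesis .
qed


lemma m1sq: "(-1::real)^a * (-1)^a = 1"
  by (induct a) auto

lemma m1_cases: "(-1::real)^m \<in> {-1, 1}"
  by (cases "even m") auto

lemma kernel_comb:
  assumes "finite W" "W \<subseteq> AC_kernel n C"
  shows "(\<lambda>k. \<Sum>v\<in>W. c v * v k) \<in> AC_kernel n C"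
  unfolding AC_kernel_def
proof (intro CollectI conjI allI impI ballI)
  fix k assume "k \<notin> AC_cols n"
  then have "\<forall>v\<in>W. v k = 0" using assms unfolding AC_kernel_def by blast
  then show "(\<Sum>v\<in>W. c v * v k) = 0" by (intro sum.neutral) auto
next
  fix r assume r: "r \<in> AC_rows C"
  have "(\<Sum>k\<in>AC_cols n. AC r k * (\<Sum>v\<in>W. c v * v k)) = (\<Sum>k\<in>AC_cols n. \<Sum>v\<in>W. c v * (AC r k * v k))"
    by (simp add: sum_distrib_left algebra_simps)
  also have "\<dots> = (\<Sum>v\<in>W. c v * (\<Sum>k\<in>AC_cols n. AC r k * v k))"
    by (subst sum.swap) (simp add: sum_distrib_left)
  also have "\<dots> = 0"
  proof -
    have "\<forall>v\<in>W. (\<Sum>k\<in>AC_cols n. AC r k * v k) = 0" using assms r unfolding AC_kernel_def by blast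
    then show ?thesis by (intro sum.neutral) auto
  qed
  finally show "(\<Sum>k\<in>AC_cols n. AC r k * (\<Sum>v\<in>W. c v * v k)) = 0" .
qed

lemma interval_sum:
  fixes U P Q :: "nat set"
  assumes "finite U" "Q \<subseteq> U" "P \<subseteq> U"
  shows "(\<Sum>T\<in>Pow U. if P \<subseteq> T \<and> T \<subseteq> Q then (-1::real)^card T * (-1)^card P else 0)
    = (if Q = P then 1 else 0)"
proof (cases "P \<subseteq> Q")
  case False
  have "(\<Sum>T\<in>Pow U. if P \<subseteq> T \<and> T \<subseteq> Q then (-1::real)^card T * (-1)^card P else 0) = 0"
    by (rule sum.neutral) (use False in auto)
  moreover have "Q \<noteq> P" using False by auto
  ultimately show ?thesis by simp
next
  case True
  show ?thesis
  proof (cases "Q = P")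
    case True
    have "(\<Sum>T\<in>Pow U. if P \<subseteq> T \<and> T \<subseteq> Q then (-1::real)^card T * (-1)^card P else 0)
      = (\<Sum>T\<in>Pow U. if T = P then (-1::real)^card T * (-1)^card P else 0)"
      using True by (intro sum.cong) auto
    also have "\<dots> = 1" using assms by (simp add: sum.delta m1sq)
    finally show ?thesis using True by simp
  next
    case False
    with True obtain a where a: "a \<in> Q" "a \<notin> P" by blast
    have "(\<Sum>T\<in>Pow U. if P \<subseteq> T \<and> T \<subseteq> Q then (-1::real)^card T * (-1)^card P else 0) = 0"
    proof (rule sum_invol_zero[where h = "fl a"])
      show "finite (Pow U)" using assms by simp
      fix T assume T: "T \<in> Pow U"
      show "fl a T \<in> Pow U" using T a assms unfolding fl_def by auto
      show "fl a (fl a T) = T" by (rule fl_fl)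
      have fT: "finite T" using T assms finite_subset by auto
      have "(P \<subseteq> fl a T \<and> fl a T \<subseteq> Q) = (P \<subseteq> T \<and> T \<subseteq> Q)" using a unfolding fl_def by auto
      then show "(if P \<subseteq> fl a T \<and> fl a T \<subseteq> Q then (-1::real)^card (fl a T) * (-1)^card P else 0)
        = - (if P \<subseteq> T \<and> T \<subseteq> Q then (-1::real)^card T * (-1)^card P else 0)"
        using card_fl[OF fT, of a] by simp
    qed
    then show ?thesis using False by simp
  qed
qed

context
  fixes n :: nat and C :: "nat set set"
  assumes sc: "simplicial_complex n C"
begin

lemma C_sub: "C \<subseteq> Pow {..<n}" using sc unfolding simplicial_complex_def by auto

lemma C_fin: "finite C" using C_sub finite_subset by blast

lemma C_down: "F \<in> C \<Longrightarrow> G \<subseteq> F \<Longrightarrow> G \<in> C" using sc unfolding simplicial_complex_def by auto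

lemma exists_facet: "T \<in> C \<Longrightarrow> \<exists>F\<in>facets C. T \<subseteq> F"
  using finite_has_maximal2[OF C_fin, of T] unfolding facets_def by auto

lemma exists_minnf:
  assumes "T \<subseteq> {..<n}" "T \<notin> C"
  shows "\<exists>S\<in>min_nonfaces n C. S \<subseteq> T"
proof -
  have fin: "finite {S. S \<subseteq> T \<and> S \<notin> C}"
  proof (rule finite_subset)
    show "{S. S \<subseteq> T \<and> S \<notin> C} \<subseteq> Pow T" by auto
    show "finite (Pow T)" using assms(1) finite_subset by auto
  qed
  obtain S where S: "S \<in> {S. S \<subseteq> T \<and> S \<notin> C}" "\<forall>b\<in>{S. S \<subseteq> T \<and> S \<notin> C}. b \<le> S \<longrightarrow> S = b"
    using finite_has_minimal2[OF fin, of T] assms by auto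
  have "S \<in> min_nonfaces n C"
    unfolding min_nonfaces_def using S assms by auto
  then show ?thesis using S by auto
qed

lemma minnf_props: "S \<in> min_nonfaces n C \<Longrightarrow> S \<subseteq> {..<n} \<and> S \<notin> C \<and> finite S"
  unfolding min_nonfaces_def using finite_subset by auto

lemma col_idx_E:
  assumes "p \<in> col_idx n C"
  obtains S B where "p = (S, ind B)" "S \<in> min_nonfaces n C" "B \<subseteq> {..<n} - S"
proof -
  obtain S i where p: "p = (S, i)" "S \<in> min_nonfaces n C" "i \<in> binvecs ({..<n} - S)"
    using assms unfolding col_idx_def by auto
  then obtain B where "i = ind B" "B \<subseteq> {..<n} - S" unfolding binvecs_eq by auto
  then show ?thesis using that p by auto
qed

lemma Kvec_col: "S \<in> min_nonfaces n C \<Longrightarrow> B \<subseteq> {..<n} - S \<Longrightarrow> Kvec (S, ind B) = alt S B"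
  using minnf_props by (intro Kvec_alt) auto

lemma cols_eq: "AC_cols n = ind ` Pow {..<n}" unfolding AC_cols_def binvecs_eq ..

lemma alt_outside: "S \<union> B \<subseteq> {..<n} \<Longrightarrow> k \<notin> AC_cols n \<Longrightarrow> alt S B k = 0"
  unfolding alt_def cols_eq by (intro sum.neutral) auto

lemma minnf_span:
  assumes S: "S \<in> min_nonfaces n C" and "finite D"
  shows "D \<inter> S = {} \<Longrightarrow> D \<subseteq> {..<n} \<Longrightarrow> \<forall>B. B \<subseteq> {..<n} - (S \<union> D) \<longrightarrow> alt (S \<union> D) B \<in> lin_span (Kset n C)"
  using assms(2)
proof (induction D rule: finite_induct)
  case empty
  show ?case
  proof (intro allI impI)
    fix B assume B: "B \<subseteq> {..<n} - (S \<union> {})"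
    then have "(S, ind B) \<in> col_idx n C" using S unfolding col_idx_def binvecs_eq by auto
    then have "Kvec (S, ind B) \<in> Kset n C" unfolding Kset_def by auto
    then show "alt (S \<union> {}) B \<in> lin_span (Kset n C)"
      using Kvec_col[OF S, of B] B by (auto intro: lin_span_base)
  qed
next
  case (insert a D)
  show ?case
  proof (intro allI impI)
    fix B assume B: "B \<subseteq> {..<n} - (S \<union> insert a D)"
    have fin: "finite (S \<union> D)" using minnf_props[OF S] insert by auto
    have aSD: "a \<notin> S \<union> D" using insert by auto
    have DS: "D \<inter> S = {}" "D \<subseteq> {..<n}" using insert.prems by auto
    note IH = insert.IH[OF DS]
    have B1: "B \<subseteq> {..<n} - (S \<union> D)" using B by auto
    have B2: "insert a B \<subseteq> {..<n} - (S \<union> D)" using B insert.prems insert.hyps by auto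
    have 1: "alt (S \<union> D) B \<in> lin_span (Kset n C)" using IH B1 by blast
    have 2: "alt (S \<union> D) (insert a B) \<in> lin_span (Kset n C)" using IH B2 by blast
    have "(\<lambda>k. alt (S \<union> D) B k + (-1) * alt (S \<union> D) (insert a B) k) \<in> lin_span (Kset n C)"
      by (rule lin_span_add[OF 1 2])
    moreover have "alt (S \<union> insert a D) B = (\<lambda>k. alt (S \<union> D) B k + (-1) * alt (S \<union> D) (insert a B) k)"
      using alt_insert[OF fin aSD] by (intro ext) simp
    ultimately show "alt (S \<union> insert a D) B \<in> lin_span (Kset n C)" by simp
  qed
qed

lemma nonface_span:
  assumes "T \<subseteq> {..<n}" "T \<notin> C"
  shows "alt T {} \<in> lin_span (Kset n C)"
proof -
  obtain S where S: "S \<in> min_nonfaces n C" "S \<subseteq> T" using exists_minnf[OF assms] by auto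
  have "finite (T - S)" using assms finite_subset by auto
  moreover have "(T - S) \<inter> S = {}" "T - S \<subseteq> {..<n}" using assms by auto
  ultimately have "\<forall>B. B \<subseteq> {..<n} - (S \<union> (T - S)) \<longrightarrow> alt (S \<union> (T - S)) B \<in> lin_span (Kset n C)"
    using minnf_span[OF S(1)] by blast
  then have "alt (S \<union> (T - S)) {} \<in> lin_span (Kset n C)" by blast
  moreover have "S \<union> (T - S) = T" using S by auto
  ultimately show ?thesis by simp
qed

end


definition gs :: "nat \<Rightarrow> ((nat \<Rightarrow> nat) \<Rightarrow> real) \<Rightarrow> nat set \<Rightarrow> real" where
  "gs n x T = (\<Sum>Q\<in>Pow {..<n}. if T \<subseteq> Q then x (ind Q) else 0)"

context
  fixes n :: nat and C :: "nat set set"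
  assumes sc: "simplicial_complex n C"
begin

lemmas cols_eq' = cols_eq[OF sc]

lemma cols_fin: "finite (AC_cols n)" unfolding cols_eq' by simp

lemma sum_cols: "sum f (AC_cols n) = (\<Sum>Q\<in>Pow {..<n}. f (ind Q))"
  unfolding AC_cols_def by (rule sum_binvecs)

lemma Kvec_kernel:
  assumes p: "p \<in> col_idx n C"
  shows "Kvec p \<in> AC_kernel n C"
proof -
  obtain S B where SB: "p = (S, ind B)" "S \<in> min_nonfaces n C" "B \<subseteq> {..<n} - S"
    using col_idx_E[OF sc p] by blast
  have Sp: "S \<subseteq> {..<n}" "S \<notin> C" "finite S" using minnf_props[OF sc SB(2)] by auto
  have K: "Kvec p = alt S B" using SB Kvec_col[OF sc] by simp
  show ?thesis unfolding AC_kernel_def K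
  proof (intro CollectI conjI allI impI ballI)
    fix k assume "k \<notin> AC_cols n"
    moreover have "S \<union> B \<subseteq> {..<n}" using Sp SB by auto
    ultimately show "alt S B k = 0" using alt_outside[OF sc, of S B k] by blast
  next
    fix r assume r: "r \<in> AC_rows C"
    then obtain F e where r': "r = (F, e)" "F \<in> facets C" unfolding AC_rows_def by auto
    have FC: "F \<in> C" using r' unfolding facets_def by auto
    have "\<not> S \<subseteq> F" using C_down[OF sc FC] Sp by blast
    then obtain s where s: "s \<in> S" "s \<notin> F" by blast
    have "(\<Sum>k\<in>AC_cols n. AC r k * alt S B k)
       = (\<Sum>k\<in>AC_cols n. \<Sum>W\<in>Pow S. (-1::real)^card W * (if k = ind (W \<union> B) then AC r k else 0))"
      unfolding alt_def sum_distrib_left by (intro sum.cong refl) auto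
    also have "\<dots> = (\<Sum>W\<in>Pow S. (-1::real)^card W * (\<Sum>k\<in>AC_cols n. (if k = ind (W \<union> B) then AC r k else 0)))"
      by (subst sum.swap) (simp add: sum_distrib_left)
    also have "\<dots> = (\<Sum>W\<in>Pow S. (-1::real)^card W * AC r (ind (W \<union> B)))"
    proof (rule sum.cong)
      fix W assume W: "W \<in> Pow S"
      have "ind (W \<union> B) \<in> AC_cols n" unfolding cols_eq' using W Sp SB by auto
      then show "(-1::real)^card W * (\<Sum>k\<in>AC_cols n. (if k = ind (W \<union> B) then AC r k else 0))
        = (-1::real)^card W * AC r (ind (W \<union> B))"
        using cols_fin by (simp add: sum.delta)
    qed simp
    also have "\<dots> = (\<Sum>W\<in>Pow S. (-1::real)^card W * (if e = ind ((W \<union> B) \<inter> F) then 1 else 0))"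
      unfolding AC_def r' by (simp add: restr_ind)
    also have "\<dots> = 0" by (rule alt_row_zero[OF Sp(3) s])
    finally show "(\<Sum>k\<in>AC_cols n. AC r k * alt S B k) = 0" .
  qed
qed

lemma span_sub_kernel: "lin_span (Kset n C) \<subseteq> AC_kernel n C"
proof
  fix x assume "x \<in> lin_span (Kset n C)"
  then obtain W c where W: "finite W" "W \<subseteq> Kset n C" "x = (\<lambda>k. \<Sum>v\<in>W. c v * v k)"
    unfolding lin_span_def by blast
  have "W \<subseteq> AC_kernel n C" using W(2) Kvec_kernel unfolding Kset_def by auto
  then show "x \<in> AC_kernel n C" using kernel_comb[OF W(1)] W(3) by simp
qed

lemma face_zero:
  assumes x: "x \<in> AC_kernel n C" and T: "T \<in> C"
  shows "gs n x T = 0"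
proof -
  obtain F where F: "F \<in> facets C" "T \<subseteq> F" using exists_facet[OF sc T] by blast
  have FC: "F \<in> C" using F unfolding facets_def by auto
  have FU: "F \<subseteq> {..<n}" using C_sub[OF sc] FC by auto
  have h: "(\<Sum>Q\<in>Pow {..<n}. if Q \<inter> F = R then x (ind Q) else 0) = 0" if R: "R \<in> Pow F" for R
  proof -
    have "(F, ind R) \<in> AC_rows C" unfolding AC_rows_def binvecs_eq using F R by auto
    then have "(\<Sum>k\<in>AC_cols n. AC (F, ind R) k * x k) = 0" using x unfolding AC_kernel_def by blast
    then have "(\<Sum>Q\<in>Pow {..<n}. AC (F, ind R) (ind Q) * x (ind Q)) = 0" by (simp add: sum_cols)
    moreover have "(\<Sum>Q\<in>Pow {..<n}. AC (F, ind R) (ind Q) * x (ind Q))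
        = (\<Sum>Q\<in>Pow {..<n}. if Q \<inter> F = R then x (ind Q) else 0)"
    proof (rule sum.cong)
      fix Q
      have "(ind R = ind (Q \<inter> F)) = (Q \<inter> F = R)" using ind_inj by blast
      then show "AC (F, ind R) (ind Q) * x (ind Q) = (if Q \<inter> F = R then x (ind Q) else 0)"
        unfolding AC_def by (simp add: restr_ind)
    qed simp
    ultimately show ?thesis by simp
  qed
  have "0 = (\<Sum>R\<in>Pow F. if T \<subseteq> R then (\<Sum>Q\<in>Pow {..<n}. if Q \<inter> F = R then x (ind Q) else 0) else 0)"
    using h by (intro sum.neutral[symmetric]) auto
  also have "\<dots> = (\<Sum>R\<in>Pow F. \<Sum>Q\<in>Pow {..<n}. if T \<subseteq> R \<and> Q \<inter> F = R then x (ind Q) else 0)"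
  proof (rule sum.cong)
    fix R show "(if T \<subseteq> R then (\<Sum>Q\<in>Pow {..<n}. if Q \<inter> F = R then x (ind Q) else 0) else 0)
      = (\<Sum>Q\<in>Pow {..<n}. if T \<subseteq> R \<and> Q \<inter> F = R then x (ind Q) else 0)"
      by (cases "T \<subseteq> R") auto
  qed simp
  also have "\<dots> = (\<Sum>Q\<in>Pow {..<n}. \<Sum>R\<in>Pow F. if T \<subseteq> R \<and> Q \<inter> F = R then x (ind Q) else 0)"
    by (rule sum.swap)
  also have "\<dots> = gs n x T"
    unfolding gs_def
  proof (rule sum.cong)
    fix Q
    have "(\<Sum>R\<in>Pow F. if T \<subseteq> R \<and> Q \<inter> F = R then x (ind Q) else 0)
      = (\<Sum>R\<in>Pow F. if R = Q \<inter> F then (if T \<subseteq> R then x (ind Q) else 0) else 0)"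
      by (rule sum.cong) auto
    also have "\<dots> = (if T \<subseteq> Q \<inter> F then x (ind Q) else 0)"
      using FU finite_subset by (subst sum.delta) auto
    also have "\<dots> = (if T \<subseteq> Q then x (ind Q) else 0)" using F by auto
    finally show "(\<Sum>R\<in>Pow F. if T \<subseteq> R \<and> Q \<inter> F = R then x (ind Q) else 0)
      = (if T \<subseteq> Q then x (ind Q) else 0)" .
  qed simp
  finally show ?thesis by simp
qed

lemma kernel_expand:
  assumes x: "x \<in> AC_kernel n C"
  shows "x = (\<lambda>k. \<Sum>T\<in>{T\<in>Pow {..<n}. T \<notin> C}. ((-1)^card T * gs n x T) * alt T {} k)"
proof
  fix k
  have "(\<Sum>T\<in>{T\<in>Pow {..<n}. T \<notin> C}. ((-1)^card T * gs n x T) * alt T {} k)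
     = (\<Sum>T\<in>Pow {..<n}. ((-1)^card T * gs n x T) * alt T {} k)"
    by (rule sum.mono_neutral_left) (auto simp: face_zero[OF x])
  also have "\<dots> = x k"
  proof (cases "k \<in> AC_cols n")
    case False
    then have "x k = 0" using x unfolding AC_kernel_def by auto
    moreover have "\<forall>T\<in>Pow {..<n}. alt T {} k = 0" using alt_outside[OF sc _ False] by auto
    ultimately show ?thesis by simp
  next
    case True
    then obtain P where P: "k = ind P" "P \<subseteq> {..<n}" unfolding cols_eq' by auto
    define d where "d T Q = (if P \<subseteq> T \<and> T \<subseteq> Q then (-1::real)^card T * (-1)^card P else 0) * x (ind Q)" for T Q
    have "(\<Sum>T\<in>Pow {..<n}. ((-1)^card T * gs n x T) * alt T {} k) = (\<Sum>T\<in>Pow {..<n}. \<Sum>Q\<in>Pow {..<n}. d T Q)"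
    proof (rule sum.cong)
      fix T assume T: "T \<in> Pow {..<n}"
      then have fT: "finite T" using finite_subset by auto
      show "((-1)^card T * gs n x T) * alt T {} k = (\<Sum>Q\<in>Pow {..<n}. d T Q)"
      proof (cases "P \<subseteq> T")
        case True
        have "((-1)^card T * gs n x T) * alt T {} k = (-1)^card T * (-1)^card P * gs n x T"
          using True alt_eval[OF fT, of P] P by simp
        also have "\<dots> = (\<Sum>Q\<in>Pow {..<n}. d T Q)"
          unfolding gs_def d_def sum_distrib_left using True by (intro sum.cong) auto
        finally show ?thesis .
      next
        case False
        then show ?thesis using alt_eval[OF fT, of P] P unfolding d_def by simp
      qed
    qed simp
    also have "\<dots> = (\<Sum>Q\<in>Pow {..<n}. \<Sum>T\<in>Pow {..<n}. d T Q)" by (rule sum.swap)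
    also have "\<dots> = (\<Sum>Q\<in>Pow {..<n}. (if Q = P then 1 else 0) * x (ind Q))"
    proof (rule sum.cong)
      fix Q assume Q: "Q \<in> Pow {..<n}"
      have "(\<Sum>T\<in>Pow {..<n}. d T Q) = (\<Sum>T\<in>Pow {..<n}. (if P \<subseteq> T \<and> T \<subseteq> Q then (-1::real)^card T * (-1)^card P else 0)) * x (ind Q)"
        unfolding d_def by (simp add: sum_distrib_right)
      also have "\<dots> = (if Q = P then 1 else 0) * x (ind Q)"
        using interval_sum[of "{..<n}" Q P] Q P by simp
      finally show "(\<Sum>T\<in>Pow {..<n}. d T Q) = (if Q = P then 1 else 0) * x (ind Q)" .
    qed simp
    also have "\<dots> = (\<Sum>Q\<in>Pow {..<n}. if Q = P then x (ind Q) else 0)" by (rule sum.cong) auto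
    also have "\<dots> = x k" using P by (simp add: sum.delta)
    finally show ?thesis .
  qed
  finally show "x k = (\<Sum>T\<in>{T\<in>Pow {..<n}. T \<notin> C}. ((-1)^card T * gs n x T) * alt T {} k)" by simp
qed

lemma kernel_sub_span: "AC_kernel n C \<subseteq> lin_span (Kset n C)"
proof
  fix x assume x: "x \<in> AC_kernel n C"
  have "(\<lambda>k. \<Sum>T\<in>{T\<in>Pow {..<n}. T \<notin> C}. ((-1)^card T * gs n x T) * alt T {} k) \<in> lin_span (Kset n C)"
    by (rule lin_span_comb) (auto intro: nonface_span[OF sc])
  then show "x \<in> lin_span (Kset n C)" using kernel_expand[OF x] by simp
qed

lemma sign_part:
  assumes k: "k \<in> AC_cols n" and p: "p \<in> col_idx n C"
  shows "(-1::real)^(\<Sum>t<n. k t) * (-1)^(\<Sum>t<n. snd p t) * Kvec p k = Mvec p k"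
proof -
  obtain S B where SB: "p = (S, ind B)" "S \<in> min_nonfaces n C" "B \<subseteq> {..<n} - S"
    using col_idx_E[OF sc p] by blast
  have Sp: "S \<subseteq> {..<n}" "S \<notin> C" "finite S" using minnf_props[OF sc SB(2)] by auto
  have BS: "B \<inter> S = {}" using SB by auto
  have K: "Kvec p = alt S B" using SB Kvec_col[OF sc] by simp
  have M: "Mvec p = altM S B" using SB Mvec_alt[OF Sp(3) BS] by simp
  have cB: "(\<Sum>t<n. snd p t) = card B" using SB sum_ind[of "{..<n}" B] by auto
  have "(-1::real)^(\<Sum>t<n. k t) * (-1)^card B * alt S B k = altM S B k"
    unfolding alt_def altM_def sum_distrib_left
  proof (rule sum.cong)
    fix W assume W: "W \<in> Pow S"
    show "(-1::real)^(\<Sum>t<n. k t) * (-1)^card B * ((-1)^card W * (if k = ind (W \<union> B) then 1 else 0))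
      = (if k = ind (W \<union> B) then 1 else 0)"
    proof (cases "k = ind (W \<union> B)")
      case True
      have fB: "finite B" using SB(3) by (metis finite_Diff finite_lessThan finite_subset)
      have fW: "finite W" "finite B" using W Sp fB finite_subset by auto
      have "(\<Sum>t<n. k t) = card (W \<union> B)" using True W Sp SB sum_ind[of "{..<n}" "W \<union> B"] by auto
      also have "\<dots> = card W + card B" using fW BS W by (intro card_Un_disjoint) auto
      finally have e: "(\<Sum>t<n. k t) = card W + card B" .
      have "(-1::real)^(card W + card B) * (-1)^card B * (-1)^card W
         = ((-1)^card W * (-1)^card W) * ((-1)^card B * (-1)^card B)"
        by (simp add: power_add mult_ac)
      also have "\<dots> = 1" by (simp add: m1sq)
      finally show ?thesis using True e by simp
    qed simp
  qed simp
  then show ?thesis using K M cB by simp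
qed

end


theorem proposition3p6:
  fixes n :: nat and C :: "nat set set"
  assumes "simplicial_complex n C"
  shows "lin_span (Kset n C) = AC_kernel n C
    \<and> (\<exists>\<rho> \<gamma>. (\<forall>k. \<rho> k \<in> {-1, 1::real}) \<and> (\<forall>p. \<gamma> p \<in> {-1, 1::real}) \<and>
          (\<forall>k\<in>AC_cols n. \<forall>p\<in>col_idx n C. \<rho> k * \<gamma> p * Kvec p k = Mvec p k))"
proof
  show "lin_span (Kset n C) = AC_kernel n C"
    using span_sub_kernel[OF assms] kernel_sub_span[OF assms] by blast
  show "\<exists>\<rho> \<gamma>. (\<forall>k. \<rho> k \<in> {-1, 1::real}) \<and> (\<forall>p. \<gamma> p \<in> {-1, 1::real}) \<and>
          (\<forall>k\<in>AC_cols n. \<forall>p\<in>col_idx n C. \<rho> k * \<gamma> p * Kvec p k = Mvec p k)"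
    by (rule exI[of _ "\<lambda>k. (-1::real)^(\<Sum>t<n. k t)"], rule exI[of _ "\<lambda>p. (-1::real)^(\<Sum>t<n. snd p t)"])
      (intro conjI allI ballI m1_cases sign_part[OF assms])
qed

end
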